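(* Fix an input $x\in\mathcal{X}$, parameters $\theta$, and an integer $N\ge 1$. Let $m_\theta(\cdot\mid x)$ be a parametric distribution over a latent space $\mathcal{Z}$, $f:\mathcal{Z}\to\mathcal{Y}$ a deterministic decoding map, and $y^\ast(x)\in\mathcal{Y}$ the correct answer, with pass rate $p=\mathbb{E}_{z\sim m_\theta(\cdot\mid x)}[\mathbb{I}\{f(z)=y^\ast(x)\}]$. Draw $z_1,\dots,z_N$ i.i.d. from $m_\theta(\cdot\mid x)$, and set $r_i=\mathbb{I}\{f(z_i)=y^\ast(x)\}$, $S_i=\nabla_\theta\log m_\theta(z_i\mid x)$, and $K=\sum_{i=1}^N r_i$. Define the estimator $$\widehat g_N(x)=\begin{cases}\dfrac{1}{K}\sum_{i=1}^N r_iS_i, & K\ge 1,\\[4pt] 0, & K=0.\end{cases}$$ For $T\in\mathbb{N}$ define the truncated objective $J^{(T)}_{\mathrm{MaxRL}}(x)=-\sum_{k=1}^{T}\frac{(1-p)^k}{k}$. Then $$\mathbb{E}\big[\widehat g_N(x)\big]=\nabla_\theta J^{(N)}_{\mathrm{MaxRL}}(x)=\sum_{k=1}^{N}\frac{1}{k}\nabla_\theta\,\mathrm{pass@}k(x),$$ where $\mathrm{pass@}k(x)=1-(1-p)^k$ is the probability that at least one of $k$ i.i.d. samples from $m_\theta(\cdot\mid x)$ decodes to $y^\ast(x)$.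
   Context: $\mathcal{X},\mathcal{Y}$ are input and output spaces, $\theta$ a real parameter vector, $\mathbb{I}\{\cdot\}$ the indicator function. The pass rate $p$ is assumed positive, $m_\theta(z\mid x)$ is differentiable in $\theta$, and gradients may be interchanged with expectations over $z$ (score-function identity). The expectation of $\widehat g_N(x)$ is over the $N$ i.i.d. samples. *)

theory Defs
  imports "HOL-Probability.Probability"
begin

definition ghat :: "nat \<Rightarrow> ('z \<Rightarrow> 'y) \<Rightarrow> 'y \<Rightarrow> ('z \<Rightarrow> 'p::real_vector) \<Rightarrow> (nat \<Rightarrow> 'z) \<Rightarrow> 'p" where
  "ghat N f ystar S zs =
     (let K = (\<Sum>i<N. of_bool (f (zs i) = ystar) :: real)
      in if K \<ge> 1 then (1 / K) *\<^sub>R (\<Sum>i<N. of_bool (f (zs i) = ystar) *\<^sub>R S (zs i)) else 0)"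

definition J_trunc :: "nat \<Rightarrow> real \<Rightarrow> real" where
  "J_trunc T p = - (\<Sum>k=1..T. (1 - p) ^ k / real k)"

definition pass_at :: "nat \<Rightarrow> real \<Rightarrow> real" where
  "pass_at k p = 1 - (1 - p) ^ k"

end

theory Submission
  imports Defs
begin

lemma comb:
  fixes p :: real assumes "finite I"
  shows "p * (\<Sum>S\<in>Pow I. if S = {} then 0 else p^(card S - 1) * (1-p)^(card I - card S)) = 1 - (1-p)^(card I)"
proof -
  have "(\<Prod>x\<in>I. p + (1-p)) = (\<Sum>X\<in>Pow I. (\<Prod>x\<in>X. p) * (\<Prod>x\<in>I-X. (1-p)))"
    by (rule prod_add[OF assms])
  also have "\<dots> = (\<Sum>X\<in>Pow I. p^card X * (1-p)^(card I - card X))"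
    using assms by (intro sum.cong refl) (auto simp: card_Diff_subset finite_subset)
  finally have 1: "1 = (\<Sum>X\<in>Pow I. p^card X * (1-p)^(card I - card X))" by simp
  have "p * (\<Sum>S\<in>Pow I. if S = {} then 0 else p^(card S - 1) * (1-p)^(card I - card S))
     = (\<Sum>S\<in>Pow I. if S = {} then 0 else p^card S * (1-p)^(card I - card S))"
    unfolding sum_distrib_left
  proof (intro sum.cong refl)
    fix S assume "S \<in> Pow I"
    then have "finite S" using assms finite_subset by auto
    then show "p * (if S = {} then 0 else p^(card S - 1) * (1-p)^(card I - card S)) = (if S = {} then 0 else p^card S * (1-p)^(card I - card S))"
      by (cases "card S") (auto simp: power_Suc)
  qed
  also have "\<dots> = (\<Sum>S\<in>Pow I. p^card S * (1-p)^(card I - card S)) - (1-p)^card I"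
  proof -
    have "(\<Sum>S\<in>Pow I. p^card S * (1-p)^(card I - card S)) = p^card ({}::'a set) * (1-p)^(card I - card ({}::'a set)) + (\<Sum>S\<in>Pow I - {{}}. p^card S * (1-p)^(card I - card S))"
      using assms by (subst sum.remove[of _ "{}"]) auto
    moreover have "(\<Sum>S\<in>Pow I. if S = {} then 0 else p^card S * (1-p)^(card I - card S)) = (\<Sum>S\<in>Pow I - {{}}. p^card S * (1-p)^(card I - card S))"
      using assms by (subst sum.remove[of _ "{}"]) (auto intro!: sum.cong)
    ultimately show ?thesis by simp
  qed
  finally show ?thesis using 1 by simp
qed

lemma prodc:
  fixes a p q :: real assumes "finite I" "S \<subseteq> I" "i \<in> S"
  shows "(\<Prod>j\<in>I. if j\<in>S then (if j=i then a else p) else q) = a * p^(card S - 1) * q^(card I - card S)"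
proof -
  have fS: "finite S" using assms finite_subset by auto
  have "(\<Prod>j\<in>I. if j\<in>S then (if j=i then a else p) else q) = (\<Prod>j\<in>I-S. if j\<in>S then (if j=i then a else p) else q) * (\<Prod>j\<in>S. if j\<in>S then (if j=i then a else p) else q)"
    using assms by (intro prod.subset_diff) auto
  also have "(\<Prod>j\<in>I-S. if j\<in>S then (if j=i then a else p) else q) = q^(card I - card S)"
    using assms fS by (simp add: card_Diff_subset)
  also have "(\<Prod>j\<in>S. if j\<in>S then (if j=i then a else p) else q) = a * (\<Prod>j\<in>S-{i}. if j\<in>S then (if j=i then a else p) else q)"
    using assms fS by (subst prod.remove[of _ i]) auto
  also have "(\<Prod>j\<in>S-{i}. if j\<in>S then (if j=i then a else p) else q) = p^(card S - 1)"
    using assms fS by simp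
  finally show ?thesis by simp
qed

lemma decomp:
  fixes R :: "'z \<Rightarrow> real" and s :: "'z \<Rightarrow> 'p::euclidean_space"
  assumes "\<And>j. j < N \<Longrightarrow> R (\<omega> j) = of_bool (f (\<omega> j) = y)"
  shows "ghat N f y s \<omega> \<bullet> b = (\<Sum>S\<in>Pow {..<N}. \<Sum>i\<in>S. (1/card S) *
     (\<Prod>j\<in>{..<N}. (if j\<in>S then R (\<omega> j) else 1 - R (\<omega> j)) * (if j = i then s (\<omega> j) \<bullet> b else 1)))"
proof -
  define T where "T = {j\<in>{..<N}. f (\<omega> j) = y}"
  have TI: "T \<in> Pow {..<N}" by (auto simp: T_def)
  have fT: "finite T" by (simp add: T_def)
  have prod1: "(\<Prod>j\<in>{..<N}. (if j\<in>S then R (\<omega> j) else 1 - R (\<omega> j)) * (if j = i then s (\<omega> j) \<bullet> b else 1))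
      = of_bool (S = T) * (s (\<omega> i) \<bullet> b)" if SI: "S \<subseteq> {..<N}" and iS: "i \<in> S" for S i
  proof -
    have "(\<Prod>j\<in>{..<N}. (if j\<in>S then R (\<omega> j) else 1 - R (\<omega> j)) * (if j = i then s (\<omega> j) \<bullet> b else 1))
      = (\<Prod>j\<in>{..<N}. (if j\<in>S then R (\<omega> j) else 1 - R (\<omega> j))) * (\<Prod>j\<in>{..<N}. (if j = i then s (\<omega> j) \<bullet> b else 1))"
      by (rule prod.distrib)
    also have "(\<Prod>j\<in>{..<N}. (if j = i then s (\<omega> j) \<bullet> b else 1)) = s (\<omega> i) \<bullet> b"
      using that by (subst prod.delta) auto
    also have "(\<Prod>j\<in>{..<N}. (if j\<in>S then R (\<omega> j) else 1 - R (\<omega> j))) = of_bool (S = T)"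
    proof (cases "S = T")
      case True
      show ?thesis using True assms by (simp, intro prod.neutral) (auto simp: T_def)
    next
      case False
      then obtain j where j: "j < N" "(j \<in> S) \<noteq> (j \<in> T)" using SI TI False by blast
      then have "(if j\<in>S then R (\<omega> j) else 1 - R (\<omega> j)) = 0" using assms[OF j(1)] by (auto simp: T_def)
      then have "(\<Prod>j\<in>{..<N}. (if j\<in>S then R (\<omega> j) else 1 - R (\<omega> j))) = 0"
        using j by (intro prod_zero) auto
      then show ?thesis using False by simp
    qed
    finally show ?thesis by simp
  qed
  have "(\<Sum>S\<in>Pow {..<N}. \<Sum>i\<in>S. (1/card S) *
     (\<Prod>j\<in>{..<N}. (if j\<in>S then R (\<omega> j) else 1 - R (\<omega> j)) * (if j = i then s (\<omega> j) \<bullet> b else 1)))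
     = (\<Sum>S\<in>Pow {..<N}. if S = T then (\<Sum>i\<in>T. (1/card T) * (s (\<omega> i) \<bullet> b)) else 0)"
    by (intro sum.cong refl) (auto simp: prod1)
  also have "\<dots> = (\<Sum>i\<in>T. (1/card T) * (s (\<omega> i) \<bullet> b))"
    using TI by (simp add: sum.delta)
  finally have R: "(\<Sum>S\<in>Pow {..<N}. \<Sum>i\<in>S. (1/card S) *
     (\<Prod>j\<in>{..<N}. (if j\<in>S then R (\<omega> j) else 1 - R (\<omega> j)) * (if j = i then s (\<omega> j) \<bullet> b else 1)))
     = (\<Sum>i\<in>T. (1/card T) * (s (\<omega> i) \<bullet> b))" .
  have K: "(\<Sum>i<N. of_bool (f (\<omega> i) = y) :: real) = real (card T)"
    by (simp add: sum_of_bool_eq T_def Int_def)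
  have L: "(\<Sum>i<N. of_bool (f (\<omega> i) = y) *\<^sub>R s (\<omega> i)) \<bullet> b = (\<Sum>i\<in>T. s (\<omega> i) \<bullet> b)"
    unfolding inner_sum_left T_def by (simp add: sum.inter_filter[symmetric] Int_def)
  show ?thesis
    unfolding R ghat_def Let_def K
    using L fT by (auto simp: sum_divide_distrib[symmetric] card_gt_0_iff Suc_le_eq)
qed


lemma geo: "(x::real) * (\<Sum>k=1..N. (1-x)^(k-1)) = 1 - (1-x)^N"
  by (induction N) (auto simp: algebra_simps)

lemma dJ: "((\<lambda>x::real. J_trunc N x) has_real_derivative (\<Sum>k=1..N. (1-x)^(k-1))) (at x)"
proof -
  have "((\<lambda>x::real. (1 - x) ^ k / real k) has_real_derivative - ((1-x)^(k-1))) (at x)" if "k \<in> {1..N}" for k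
    using that by (auto intro!: derivative_eq_intros simp: field_simps)
  then have "((\<lambda>x::real. (\<Sum>k=1..N. (1 - x) ^ k / real k)) has_real_derivative (\<Sum>k=1..N. - ((1-x)^(k-1)))) (at x)"
    by (intro DERIV_sum) auto
  from DERIV_minus[OF this] show ?thesis unfolding J_trunc_def by (simp add: sum_negf)
qed

lemma dP: "k \<ge> 1 \<Longrightarrow> ((\<lambda>x::real. pass_at k x) has_real_derivative (real k * (1-x)^(k-1))) (at x)"
  unfolding pass_at_def by (auto intro!: derivative_eq_intros simp: field_simps)

theorem theorem2:
  fixes M :: "'z measure" and m :: "'p::euclidean_space \<Rightarrow> 'z \<Rightarrow> real"
    and \<theta> :: 'p and f :: "'z \<Rightarrow> 'y" and ystar :: 'y and N :: nat
    and s :: "'z \<Rightarrow> 'p"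
  defines "A \<equiv> {z \<in> space M. f z = ystar}"
  defines "p \<equiv> (\<lambda>t. \<integral>z. indicator A z * m t z \<partial>M)"
  defines "P \<equiv> PiM {..<N} (\<lambda>_. density M (\<lambda>z. ennreal (m \<theta> z)))"
  assumes N: "N \<ge> 1"
    and m_meas: "\<And>t. m t \<in> borel_measurable M"
    and m_pos: "\<And>t z. z \<in> space M \<Longrightarrow> 0 < m t z"
    and m_int: "\<And>t. integrable M (m t)"
    and m_norm: "\<And>t. (\<integral>z. m t z \<partial>M) = 1"
    and A_meas: "A \<in> sets M"
    and s_meas: "s \<in> borel_measurable M"
    and score: "\<And>z. z \<in> space M \<Longrightarrow> ((\<lambda>t. ln (m t z)) has_derivative (\<lambda>h. s z \<bullet> h)) (at \<theta>)"
    and interch_int: "integrable M (\<lambda>z. (indicator A z * m \<theta> z) *\<^sub>R s z)"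
    and interch: "(p has_derivative (\<lambda>h. (\<integral>z. (indicator A z * m \<theta> z) *\<^sub>R s z \<partial>M) \<bullet> h)) (at \<theta>)"
    and p_pos: "p \<theta> > 0"
  shows "integrable P (ghat N f ystar s)
    \<and> ((\<lambda>t. J_trunc N (p t)) has_derivative (\<lambda>h. (\<integral>\<omega>. ghat N f ystar s \<omega> \<partial>P) \<bullet> h)) (at \<theta>)
    \<and> (\<exists>G. (\<forall>k\<in>{1..N}. ((\<lambda>t. pass_at k (p t)) has_derivative (\<lambda>h. G k \<bullet> h)) (at \<theta>))
           \<and> (\<integral>\<omega>. ghat N f ystar s \<omega> \<partial>P) = (\<Sum>k=1..N. (1 / real k) *\<^sub>R G k))"
proof -
  define Q where "Q = density M (\<lambda>z. ennreal (m \<theta> z))"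
  define g where "g = (\<integral>z. (indicator A z * m \<theta> z) *\<^sub>R s z \<partial>M)"
  define q where "q = (\<Sum>k=1..N. (1 - p \<theta>)^(k-1))"
  define I where "I = {..<N}"
  define R where "R = (\<lambda>z. indicator A z :: real)"
  have [measurable]: "m \<theta> \<in> borel_measurable M" "s \<in> borel_measurable M" "A \<in> sets M"
    using m_meas s_meas A_meas by auto
  have nn: "AE z in M. 0 \<le> m \<theta> z" using m_pos by (auto intro!: AE_I2 less_imp_le)
  have PQ: "P = PiM I (\<lambda>_. Q)" unfolding P_def Q_def I_def ..
  have "emeasure Q (space Q) = 1"
  proof -
    have "emeasure Q (space Q) = (\<integral>\<^sup>+ z. ennreal (m \<theta> z) * indicator (space M) z \<partial>M)"
      unfolding Q_def by (subst emeasure_density) auto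
    also have "\<dots> = (\<integral>\<^sup>+ z. ennreal (m \<theta> z) \<partial>M)"
      by (intro nn_integral_cong) (simp add: indicator_def)
    also have "\<dots> = ennreal (\<integral>z. m \<theta> z \<partial>M)"
      using m_int nn by (intro nn_integral_eq_integral) auto
    finally show ?thesis using m_norm by simp
  qed
  then interpret Qp: prob_space Q by (rule prob_spaceI)
  interpret PS: product_sigma_finite "\<lambda>_. Q"
    unfolding product_sigma_finite_def using Qp.sigma_finite_measure_axioms by simp
  have sQ: "space Q = space M" unfolding Q_def by simp
  have AQ[measurable]: "A \<in> sets Q" unfolding Q_def using A_meas by simp
  have intQ: "integral\<^sup>L Q h = (\<integral>z. m \<theta> z * h z \<partial>M)" if "h \<in> borel_measurable M" for h :: "'z \<Rightarrow> real"
    unfolding Q_def using that nn by (subst integral_density) auto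
  have intbQ: "integrable Q h \<longleftrightarrow> integrable M (\<lambda>z. m \<theta> z * h z)" if "h \<in> borel_measurable M" for h :: "'z \<Rightarrow> real"
    unfolding Q_def using that nn by (subst integrable_density) auto
  have R_int: "integrable Q R" unfolding R_def
    by (rule Qp.integrable_const_bound[where B=1]) (auto simp: sQ)
  have R1_int: "integrable Q (\<lambda>z. 1 - R z)" using R_int by auto
  have R_val: "integral\<^sup>L Q R = p \<theta>" unfolding R_def p_def
    by (subst intQ) (auto simp: mult.commute)
  have R1_val: "integral\<^sup>L Q (\<lambda>z. 1 - R z) = 1 - p \<theta>"
    using R_int R_val by (simp add: Qp.prob_space)
  have Rs_int: "integrable Q (\<lambda>z. R z * (s z \<bullet> b))" for b
  proof -
    have "integrable M (\<lambda>z. ((indicator A z * m \<theta> z) *\<^sub>R s z) \<bullet> b)"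
      using interch_int by (rule integrable_inner_left)
    then show ?thesis unfolding R_def
      by (subst intbQ) (auto simp: mult_ac)
  qed
  have Rs_val: "integral\<^sup>L Q (\<lambda>z. R z * (s z \<bullet> b)) = g \<bullet> b" for b
  proof -
    have "integral\<^sup>L Q (\<lambda>z. R z * (s z \<bullet> b)) = (\<integral>z. ((indicator A z * m \<theta> z) *\<^sub>R s z) \<bullet> b \<partial>M)"
      unfolding R_def by (subst intQ) (auto simp: mult_ac)
    also have "\<dots> = g \<bullet> b" unfolding g_def by (rule integral_inner_left) (simp add: interch_int)
    finally show ?thesis .
  qed
  define F where "F = (\<lambda>(b::'p) (S::nat set) (i::nat) (j::nat) (z::'z). (if j\<in>S then R z else 1 - R z) * (if j = i then s z \<bullet> b else 1))"
  have F_int: "integrable Q (F b S i j)" if "i \<in> S" for b S i j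
    using that R_int R1_int Rs_int unfolding F_def by (cases "j \<in> S"; cases "j = i") auto
  have F_val: "integral\<^sup>L Q (F b S i j) = (if j\<in>S then (if j = i then g \<bullet> b else p \<theta>) else 1 - p \<theta>)"
    if "i \<in> S" for b S i j
    using that R_val R1_val Rs_val unfolding F_def by (cases "j \<in> S"; cases "j = i") auto
  have sP: "space P = PiE I (\<lambda>_. space M)" unfolding PQ by (simp add: space_PiM sQ)
  have dec: "ghat N f ystar s \<omega> \<bullet> b = (\<Sum>S\<in>Pow I. \<Sum>i\<in>S. (1 / real (card S)) * (\<Prod>j\<in>I. F b S i j (\<omega> j)))"
    if "\<omega> \<in> space P" for \<omega> b
    unfolding F_def I_def
  proof (rule decomp)
    fix j assume "j < N"
    then have "\<omega> j \<in> space M" using that sP I_def by (auto simp: PiE_def Pi_def)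
    then show "R (\<omega> j) = of_bool (f (\<omega> j) = ystar)" by (simp add: R_def A_def indicator_def)
  qed
  have comp_int: "integrable P (\<lambda>\<omega>. ghat N f ystar s \<omega> \<bullet> b)" for b
  proof -
    have "integrable P (\<lambda>\<omega>. \<Sum>S\<in>Pow I. \<Sum>i\<in>S. (1 / real (card S)) * (\<Prod>j\<in>I. F b S i j (\<omega> j)))"
      unfolding PQ I_def
      by (intro Bochner_Integration.integrable_sum integrable_mult_right PS.product_integrable_prod F_int) auto
    moreover have "integrable P (\<lambda>\<omega>. ghat N f ystar s \<omega> \<bullet> b) \<longleftrightarrow> integrable P (\<lambda>\<omega>. \<Sum>S\<in>Pow I. \<Sum>i\<in>S. (1 / real (card S)) * (\<Prod>j\<in>I. F b S i j (\<omega> j)))"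
      by (rule Bochner_Integration.integrable_cong[OF refl]) (simp add: dec)
    ultimately show ?thesis by simp
  qed
  have comp_val: "(\<integral>\<omega>. ghat N f ystar s \<omega> \<bullet> b \<partial>P) = q * (g \<bullet> b)" for b
  proof -
    have fI: "finite I" by (simp add: I_def)
    have "(\<integral>\<omega>. ghat N f ystar s \<omega> \<bullet> b \<partial>P) = (\<integral>\<omega>. (\<Sum>S\<in>Pow I. \<Sum>i\<in>S. (1 / real (card S)) * (\<Prod>j\<in>I. F b S i j (\<omega> j))) \<partial>P)"
      by (rule Bochner_Integration.integral_cong) (auto simp: dec)
    also have "\<dots> = (\<Sum>S\<in>Pow I. \<Sum>i\<in>S. (1 / real (card S)) * (\<Prod>j\<in>I. integral\<^sup>L Q (F b S i j)))"
    proof -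
      have tint: "integrable (PiM I (\<lambda>_. Q)) (\<lambda>\<omega>. \<Prod>j\<in>I. F b S i j (\<omega> j))" if "i \<in> S" for S i
        by (rule PS.product_integrable_prod) (auto intro: F_int that fI)
      have tval: "(\<integral>\<omega>. (\<Prod>j\<in>I. F b S i j (\<omega> j)) \<partial>PiM I (\<lambda>_. Q)) = (\<Prod>j\<in>I. integral\<^sup>L Q (F b S i j))" if "i \<in> S" for S i
        by (rule PS.product_integral_prod) (auto intro: F_int that fI)
      have "(\<integral>\<omega>. (\<Sum>S\<in>Pow I. \<Sum>i\<in>S. (1 / real (card S)) * (\<Prod>j\<in>I. F b S i j (\<omega> j))) \<partial>PiM I (\<lambda>_. Q))
          = (\<Sum>S\<in>Pow I. (\<integral>\<omega>. (\<Sum>i\<in>S. (1 / real (card S)) * (\<Prod>j\<in>I. F b S i j (\<omega> j))) \<partial>PiM I (\<lambda>_. Q)))"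
        by (rule Bochner_Integration.integral_sum) (intro Bochner_Integration.integrable_sum integrable_mult_right tint; simp)
      also have "\<dots> = (\<Sum>S\<in>Pow I. \<Sum>i\<in>S. (\<integral>\<omega>. (1 / real (card S)) * (\<Prod>j\<in>I. F b S i j (\<omega> j)) \<partial>PiM I (\<lambda>_. Q)))"
        by (intro sum.cong refl Bochner_Integration.integral_sum integrable_mult_right tint) simp
      also have "\<dots> = (\<Sum>S\<in>Pow I. \<Sum>i\<in>S. (1 / real (card S)) * (\<Prod>j\<in>I. integral\<^sup>L Q (F b S i j)))"
        by (intro sum.cong refl) (simp only: integral_mult_right_zero tval)
      finally show ?thesis unfolding PQ .
    qed
    also have "\<dots> = (\<Sum>S\<in>Pow I. \<Sum>i\<in>S. (1 / real (card S)) * ((g \<bullet> b) * (p \<theta>)^(card S - 1) * (1 - p \<theta>)^(card I - card S)))"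
      using fI by (intro sum.cong refl) (simp add: F_val prodc)
    also have "\<dots> = (\<Sum>S\<in>Pow I. (g \<bullet> b) * (if S = {} then 0 else (p \<theta>)^(card S - 1) * (1 - p \<theta>)^(card I - card S)))"
    proof (intro sum.cong refl)
      fix S assume "S \<in> Pow I"
      then have "finite S" using fI finite_subset by auto
      then show "(\<Sum>i\<in>S. (1 / real (card S)) * ((g \<bullet> b) * (p \<theta>)^(card S - 1) * (1 - p \<theta>)^(card I - card S)))
         = (g \<bullet> b) * (if S = {} then 0 else (p \<theta>)^(card S - 1) * (1 - p \<theta>)^(card I - card S))"
        by auto
    qed
    also have "\<dots> = (g \<bullet> b) * (\<Sum>S\<in>Pow I. (if S = {} then 0 else (p \<theta>)^(card S - 1) * (1 - p \<theta>)^(card I - card S)))"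
      by (simp add: sum_distrib_left)
    also have "(\<Sum>S\<in>Pow I. (if S = {} then 0 else (p \<theta>)^(card S - 1) * (1 - p \<theta>)^(card I - card S))) = q"
    proof -
      have "p \<theta> * (\<Sum>S\<in>Pow I. (if S = {} then 0 else (p \<theta>)^(card S - 1) * (1 - p \<theta>)^(card I - card S))) = p \<theta> * q"
        using comb[OF fI, of "p \<theta>"] geo[of "p \<theta>" N] unfolding q_def by (simp add: I_def)
      then show ?thesis using p_pos by simp
    qed
    finally show ?thesis by simp
  qed
  have int: "integrable P (ghat N f ystar s)"
  proof -
    have "integrable P (\<lambda>\<omega>. \<Sum>b\<in>Basis. (ghat N f ystar s \<omega> \<bullet> b) *\<^sub>R b)"
      using comp_int by (intro Bochner_Integration.integrable_sum integrable_scaleR_left) auto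
    then show ?thesis by (simp add: euclidean_representation)
  qed
  have E: "(\<integral>\<omega>. ghat N f ystar s \<omega> \<partial>P) = q *\<^sub>R g"
  proof (rule euclidean_eqI)
    fix b :: 'p assume "b \<in> Basis"
    have "(\<integral>\<omega>. ghat N f ystar s \<omega> \<partial>P) \<bullet> b = (\<integral>\<omega>. ghat N f ystar s \<omega> \<bullet> b \<partial>P)"
      using int by simp
    then show "(\<integral>\<omega>. ghat N f ystar s \<omega> \<partial>P) \<bullet> b = (q *\<^sub>R g) \<bullet> b" by (simp add: comp_val)
  qed
  have interch': "(p has_derivative (\<lambda>h. g \<bullet> h)) (at \<theta>)" using interch unfolding g_def .
  have D1: "((\<lambda>t. J_trunc N (p t)) has_derivative (\<lambda>h. (q *\<^sub>R g) \<bullet> h)) (at \<theta>)"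
  proof -
    have "((\<lambda>t. J_trunc N (p t)) has_derivative (\<lambda>h. q * (g \<bullet> h))) (at \<theta>)"
      using has_derivative_compose[OF interch' has_field_derivative_imp_has_derivative[OF dJ[of N "p \<theta>"]]]
      unfolding q_def by simp
    then show ?thesis by simp
  qed
  define G where "G = (\<lambda>k. (real k * (1 - p \<theta>)^(k-1)) *\<^sub>R g)"
  have D2: "((\<lambda>t. pass_at k (p t)) has_derivative (\<lambda>h. G k \<bullet> h)) (at \<theta>)" if "k \<in> {1..N}" for k
  proof -
    have "((\<lambda>t. pass_at k (p t)) has_derivative (\<lambda>h. (real k * (1 - p \<theta>)^(k-1)) * (g \<bullet> h))) (at \<theta>)"
      using has_derivative_compose[OF interch' has_field_derivative_imp_has_derivative[OF dP[of k "p \<theta>"]]] that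
      by simp
    then show ?thesis unfolding G_def by simp
  qed
  have S: "(\<Sum>k=1..N. (1 / real k) *\<^sub>R G k) = q *\<^sub>R g"
    unfolding G_def q_def scaleR_sum_left by (intro sum.cong refl) auto
  have D1': "((\<lambda>t. J_trunc N (p t)) has_derivative (\<lambda>h. (\<integral>\<omega>. ghat N f ystar s \<omega> \<partial>P) \<bullet> h)) (at \<theta>)"
    using D1 E by simp
  have X: "(\<forall>k\<in>{1..N}. ((\<lambda>t. pass_at k (p t)) has_derivative (\<lambda>h. G k \<bullet> h)) (at \<theta>))
           \<and> (\<integral>\<omega>. ghat N f ystar s \<omega> \<partial>P) = (\<Sum>k=1..N. (1 / real k) *\<^sub>R G k)"
    using D2 S E by simp
  show ?thesis using int D1' X by blast
qed

end
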